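(* For every $\tau\in\mathbb{R}$ and every constant $C$ with $0<C<1/\log 4$, there exists $N_0=N_0(C,\tau)$ such that for all integers $N\ge N_0$, \[ \mathfrak{m}_N(\tau) < \exp\!\left(-C(\log N)^2\right). \]
   Context: For a positive integer $N$ let $\mathcal{S}_N:=\left\{\sum_{n=1}^N \frac{s_n}{n} : s_1,\dots,s_N\in\{-1,+1\}\right\}$, and for $\tau\in\mathbb{R}$ let $\mathfrak{m}_N(\tau):=\min\{|\mathfrak{s}-\tau| : \mathfrak{s}\in\mathcal{S}_N\}$. *)

theory Defs
  imports Complex_Main
begin

definition signed_sums :: "nat \<Rightarrow> real set" where
  "signed_sums N = {(\<Sum>n=1..N. s n / real n) | s. \<forall>n\<in>{1..N}. s n \<in> {-1, 1}}"

definition min_dist :: "nat \<Rightarrow> real \<Rightarrow> real" where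
  "min_dist N \<tau> = Min ((\<lambda>x. \<bar>x - \<tau>\<bar>) ` signed_sums N)"

end

theory Submission
  imports Defs "HOL-Analysis.Harmonic_Numbers" "HOL-Real_Asymp.Real_Asymp"
begin


definition PS :: "nat set \<Rightarrow> real set" where
  "PS A = {(\<Sum>n\<in>A. s n / real n) | s. \<forall>n\<in>A. s n \<in> {-1, 1}}"

lemma PS_empty: "0 \<in> PS {}"
  unfolding PS_def by auto

lemma PS_neg: assumes "x \<in> PS A" shows "- x \<in> PS A"
proof -
  from assms obtain s where s: "\<forall>n\<in>A. s n \<in> {-1,1}" "x = (\<Sum>n\<in>A. s n / real n)"
    unfolding PS_def by auto
  have "- x = (\<Sum>n\<in>A. (- s n) / real n)" using s(2) by (simp add: sum_negf)
  moreover have "\<forall>n\<in>A. - s n \<in> {-1,1}" using s(1) by auto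
  ultimately show ?thesis unfolding PS_def by (intro CollectI exI[of _ "\<lambda>n. - s n"]) auto
qed

lemma PS_single: "1 / real n \<in> PS {n}"
  unfolding PS_def by (rule CollectI, rule exI[of _ "\<lambda>_. 1"]) auto

lemma PS_add:
  assumes "finite A" "finite B" "A \<inter> B = {}" "x \<in> PS A" "y \<in> PS B"
  shows "x + y \<in> PS (A \<union> B)"
proof -
  from assms(4) obtain s where s: "\<forall>n\<in>A. s n \<in> {-1,1}" "x = (\<Sum>n\<in>A. s n / real n)"
    unfolding PS_def by auto
  from assms(5) obtain t where t: "\<forall>n\<in>B. t n \<in> {-1,1}" "y = (\<Sum>n\<in>B. t n / real n)"
    unfolding PS_def by auto
  define u where "u n = (if n \<in> A then s n else t n)" for n
  have "(\<Sum>n\<in>A \<union> B. u n / real n) = (\<Sum>n\<in>A. u n / real n) + (\<Sum>n\<in>B. u n / real n)"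
    using assms(1-3) by (rule sum.union_disjoint)
  also have "(\<Sum>n\<in>A. u n / real n) = x" unfolding s(2) u_def by (rule sum.cong) auto
  also have "(\<Sum>n\<in>B. u n / real n) = y" unfolding t(2) u_def using assms(3)
    by (intro sum.cong) auto
  finally have "x + y = (\<Sum>n\<in>A \<union> B. u n / real n)" by simp
  moreover have "\<forall>n\<in>A \<union> B. u n \<in> {-1,1}" using s(1) t(1) unfolding u_def by auto
  ultimately show ?thesis unfolding PS_def by blast
qed

lemma PS_finite: assumes "finite A" shows "finite (PS A)"
proof -
  have "PS A \<subseteq> (\<lambda>T. \<Sum>n\<in>A. (if n \<in> T then 1 else -1) / real n) ` Pow A"
  proof
    fix x assume "x \<in> PS A"
    then obtain s where s: "\<forall>n\<in>A. s n \<in> {-1,1}" "x = (\<Sum>n\<in>A. s n / real n)"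
      unfolding PS_def by auto
    have "x = (\<Sum>n\<in>A. (if n \<in> {n\<in>A. s n = 1} then 1 else -1) / real n)"
      unfolding s(2) using s(1) by (intro sum.cong) auto
    then show "x \<in> (\<lambda>T. \<Sum>n\<in>A. (if n \<in> T then 1 else -1) / real n) ` Pow A" by blast
  qed
  then show ?thesis using assms finite_subset by blast
qed

lemma min_dist_le:
  assumes "y \<in> PS {1..N}"
  shows "min_dist N \<tau> \<le> \<bar>y - \<tau>\<bar>"
proof -
  have eq: "signed_sums N = PS {1..N}" unfolding signed_sums_def PS_def by simp
  show ?thesis unfolding min_dist_def eq
    by (rule Min_le) (use assms PS_finite in auto)
qed

definition cov :: "nat set \<Rightarrow> real \<Rightarrow> real \<Rightarrow> bool" where
  "cov B R \<delta> \<longleftrightarrow> (\<forall>x. \<bar>x\<bar> \<le> R \<longrightarrow> (\<exists>y\<in>PS B. \<bar>x - y\<bar> \<le> \<delta>))"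

lemma cov_empty: "cov {} \<delta> \<delta>"
  unfolding cov_def using PS_empty by force

lemma cov_add:
  assumes "cov B R \<delta>" "finite A" "finite B" "A \<inter> B = {}" "g \<in> PS A" "0 \<le> g" "g \<le> R"
  shows "cov (A \<union> B) (R + g) \<delta>"
  unfolding cov_def
proof (intro allI impI)
  fix x assume x: "\<bar>x\<bar> \<le> R + g"
  show "\<exists>y\<in>PS (A \<union> B). \<bar>x - y\<bar> \<le> \<delta>"
  proof (cases "x \<ge> 0")
    case True
    have "\<bar>x - g\<bar> \<le> R" using x True assms(6,7) by auto
    then obtain y where y: "y \<in> PS B" "\<bar>x - g - y\<bar> \<le> \<delta>" using assms(1) unfolding cov_def by blast
    have "g + y \<in> PS (A \<union> B)" using PS_add[OF assms(2-5) y(1)] .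
    then show ?thesis using y(2) by (intro bexI[of _ "g + y"]) (auto simp: algebra_simps)
  next
    case False
    have "\<bar>x + g\<bar> \<le> R" using x False assms(6,7) by auto
    then obtain y where y: "y \<in> PS B" "\<bar>x + g - y\<bar> \<le> \<delta>" using assms(1) unfolding cov_def by blast
    have "- g + y \<in> PS (A \<union> B)" using PS_add[OF assms(2-4) PS_neg[OF assms(5)] y(1)] .
    then show ?thesis using y(2) by (intro bexI[of _ "- g + y"]) (auto simp: algebra_simps)
  qed
qed

lemma cov_fam:
  assumes "finite I" "cov B R \<delta>" "finite B" "\<And>i. i \<in> I \<Longrightarrow> finite (A i)"
    "\<And>i. i \<in> I \<Longrightarrow> A i \<inter> B = {}"
    "\<And>i j. i \<in> I \<Longrightarrow> j \<in> I \<Longrightarrow> i \<noteq> j \<Longrightarrow> A i \<inter> A j = {}"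
    "\<And>i. i \<in> I \<Longrightarrow> g i \<in> PS (A i)" "\<And>i. i \<in> I \<Longrightarrow> 0 \<le> g i \<and> g i \<le> R"
  shows "cov (B \<union> (\<Union>i\<in>I. A i)) (R + (\<Sum>i\<in>I. g i)) \<delta>"
  using assms(1,4-8)
proof (induction I rule: finite_induct)
  case empty
  then show ?case using assms(2) by simp
next
  case (insert i I)
  have IH: "cov (B \<union> (\<Union>i\<in>I. A i)) (R + (\<Sum>i\<in>I. g i)) \<delta>"
    using insert by auto
  have nn: "0 \<le> (\<Sum>i\<in>I. g i)" using insert.prems(5) by (intro sum_nonneg) auto
  have "cov (A i \<union> (B \<union> (\<Union>i\<in>I. A i))) (R + (\<Sum>i\<in>I. g i) + g i) \<delta>"
  proof (rule cov_add[OF IH])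
    show "finite (A i)" "g i \<in> PS (A i)" "0 \<le> g i" using insert.prems by auto
    show "finite (B \<union> (\<Union>i\<in>I. A i))" using insert.prems assms(3) insert(1) by auto
    show "A i \<inter> (B \<union> (\<Union>i\<in>I. A i)) = {}"
    proof -
      have "A i \<inter> A j = {}" if "j \<in> I" for j using insert.prems(3)[of i j] that insert(2) by auto
      then show ?thesis using insert.prems(2)[of i] by auto
    qed
    show "g i \<le> R + (\<Sum>i\<in>I. g i)" using insert.prems(5)[of i] nn by auto
  qed
  moreover have "A i \<union> (B \<union> (\<Union>i\<in>I. A i)) = B \<union> (\<Union>i\<in>insert i I. A i)" by auto
  moreover have "R + (\<Sum>i\<in>I. g i) + g i = R + (\<Sum>i\<in>insert i I. g i)" using insert by simp
  ultimately show ?case by simp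
qed

lemma cov_harm:
  assumes "cov B R \<delta>" "finite B" "B \<inter> {1..M} = {}" "M \<ge> 1" "1 / real M \<le> R"
  shows "cov (B \<union> {1..M}) (R + (\<Sum>n=1..M. 1 / real n)) \<delta>"
proof -
  define P where "P k \<longleftrightarrow> cov (B \<union> {k<..M}) (R + (\<Sum>n\<in>{k<..M}. 1 / real n)) \<delta> \<and>
      (k \<ge> 1 \<longrightarrow> 1 / real k \<le> R + (\<Sum>n\<in>{k<..M}. 1 / real n))" for k
  have "P 0"
  proof (rule inc_induct[of 0 M P])
    show "P M" unfolding P_def using assms by simp
  next
    fix n assume n: "0 \<le> n" "n < M" and IH: "P (Suc n)"
    have nn: "0 \<le> (\<Sum>n\<in>{Suc n<..M}. 1 / real n)" by (intro sum_nonneg) auto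
    have eq: "{n<..M} = insert (Suc n) {Suc n<..M}" using n by auto
    have c: "cov ({Suc n} \<union> (B \<union> {Suc n<..M})) (R + (\<Sum>n\<in>{Suc n<..M}. 1 / real n) + 1 / real (Suc n)) \<delta>"
      apply (rule cov_add)
      using IH assms n PS_single[of "Suc n"] unfolding P_def by auto
    have s: "(\<Sum>n\<in>{n<..M}. 1 / real n) = 1 / real (Suc n) + (\<Sum>n\<in>{Suc n<..M}. 1 / real n)"
      unfolding eq by (subst sum.insert) auto
    have "cov (B \<union> {n<..M}) (R + (\<Sum>n\<in>{n<..M}. 1 / real n)) \<delta>"
      using c unfolding s eq by (simp add: ac_simps insert_commute)
    moreover have "1 \<le> n \<longrightarrow> 1 / real n \<le> R + (\<Sum>n\<in>{n<..M}. 1 / real n)"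
    proof
      assume "1 \<le> n"
      have a: "1 / real (Suc n) \<le> R + (\<Sum>n\<in>{Suc n<..M}. 1 / real n)" using IH unfolding P_def by auto
      have "1 / real n \<le> 2 / real (Suc n)" using \<open>1 \<le> n\<close> by (simp add: field_simps)
      then show "1 / real n \<le> R + (\<Sum>n\<in>{n<..M}. 1 / real n)" unfolding s using a by simp
    qed
    ultimately show "P n" unfolding P_def by blast
  qed simp
  moreover have "{0<..M} = {1..M}" by auto
  ultimately show ?thesis unfolding P_def by simp
qed

lemma PS_small:
  assumes "finite A" "\<And>n. n \<in> A \<Longrightarrow> n \<ge> a" "a \<ge> 1"
  shows "\<exists>y\<in>PS A. \<bar>y\<bar> \<le> 1 / real a"
  using assms
proof (induction A rule: finite_induct)
  case empty
  then show ?case using PS_empty by force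
next
  case (insert n A)
  then obtain y where y: "y \<in> PS A" "\<bar>y\<bar> \<le> 1 / real a" by auto
  have an: "a \<le> n" using insert.prems by auto
  have na: "1 / real n \<le> 1 / real a" "0 < 1 / real n" using an insert.prems(2)
    by (auto simp: frac_le)
  show ?case
  proof (cases "y \<ge> 0")
    case True
    have "- (1 / real n) + y \<in> PS ({n} \<union> A)"
      using PS_add[OF _ insert(1) _ PS_neg[OF PS_single] y(1)] insert(2) by auto
    moreover have "\<bar>- (1 / real n) + y\<bar> \<le> 1 / real a" using True y na by (simp add: abs_le_iff) (smt (verit) divide_pos_pos of_nat_0_less_iff)
    ultimately show ?thesis unfolding insert_is_Un[of n A] by blast
  next
    case False
    have "1 / real n + y \<in> PS ({n} \<union> A)"
      using PS_add[OF _ insert(1) _ PS_single y(1)] insert(2) by auto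
    moreover have "\<bar>1 / real n + y\<bar> \<le> 1 / real a" using False y na by (simp add: abs_le_iff) (smt (verit) divide_pos_pos of_nat_0_less_iff)
    ultimately show ?thesis unfolding insert_is_Un[of n A] by blast
  qed
qed



definition cc :: nat where "cc = 128"

lemma cc_pos: "cc > 0" unfolding cc_def by simp

fun F :: "nat \<Rightarrow> nat \<Rightarrow> real \<Rightarrow> real" where
  "F 0 p x = 1 / x ^ p"
| "F (Suc k) p x = F k p x - F k p (x + real cc * 2 ^ k)"

lemma F_deriv:
  assumes "0 < x"
  shows "(F k p has_real_derivative (- real p * F k (Suc p) x)) (at x)"
  using assms
proof (induction k arbitrary: p x)
  case 0
  have d: "((\<lambda>x. x ^ p) has_real_derivative (real p * x ^ (p - 1))) (at x)"
    using DERIV_pow[of p x] by simp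
  have "((\<lambda>x. inverse (x ^ p)) has_real_derivative
      (- (inverse (x ^ p) * (real p * x ^ (p - 1)) * inverse (x ^ p)))) (at x)"
    by (rule DERIV_inverse'[OF d]) (use 0 in simp)
  moreover have "- (inverse (x ^ p) * (real p * x ^ (p - 1)) * inverse (x ^ p)) = - real p * (1 / x ^ Suc p)"
  proof (cases p)
    case 0 then show ?thesis by simp
  next
    case (Suc q) then show ?thesis using 0 by (simp add: field_simps)
  qed
  ultimately have "((\<lambda>x. 1 / x ^ p) has_real_derivative (- real p * (1 / x ^ Suc p))) (at x)"
    by (simp add: inverse_eq_divide)
  moreover have "F 0 p = (\<lambda>x. 1 / x ^ p)" by auto
  ultimately show ?case by simp
next
  case (Suc k)
  define h where "h = real cc * 2 ^ k"
  have hpos: "0 < h" unfolding h_def using cc_pos by simp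
  have eq: "F (Suc k) p = (\<lambda>y. F k p y - F k p (y + h))" unfolding h_def by auto
  have d1: "(F k p has_real_derivative (- real p * F k (Suc p) x)) (at x)" using Suc by blast
  have "(F k p has_real_derivative (- real p * F k (Suc p) (x + h))) (at (x + h))"
    using Suc.IH[of "x + h"] Suc.prems hpos by simp
  then have d2: "((\<lambda>y. F k p (y + h)) has_real_derivative (- real p * F k (Suc p) (x + h))) (at x)"
    by (simp add: DERIV_shift)
  have "((\<lambda>y. F k p y - F k p (y + h)) has_real_derivative
      (- real p * F k (Suc p) x - (- real p * F k (Suc p) (x + h)))) (at x)"
    by (rule DERIV_diff[OF d1 d2])
  moreover have "- real p * F k (Suc p) x - (- real p * F k (Suc p) (x + h)) = - real p * F (Suc k) (Suc p) x"
    unfolding h_def by (simp add: algebra_simps)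
  ultimately show ?case unfolding eq by simp
qed

definition Bc :: "nat \<Rightarrow> nat \<Rightarrow> real" where
  "Bc k p = real cc ^ k * 2 ^ (\<Sum>{..<k}) * pochhammer (real p) k"

lemma Bc_Suc: "Bc (Suc k) p = real cc * 2 ^ k * real p * Bc k (Suc p)"
  unfolding Bc_def by (simp add: pochhammer_rec power_add algebra_simps)

lemma Bc_nonneg: "0 \<le> Bc k p"
proof (cases "p = 0")
  case True then show ?thesis unfolding Bc_def by (simp add: pochhammer_0_left)
next
  case False then show ?thesis unfolding Bc_def by (intro mult_nonneg_nonneg pochhammer_nonneg) auto
qed

lemma F_bounds:
  assumes "0 < x"
  shows "Bc k p / (x + real cc * (2 ^ k - 1)) ^ (p + k) \<le> F k p x \<and> F k p x \<le> Bc k p / x ^ (p + k)"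
  using assms
proof (induction k arbitrary: p x)
  case 0
  then show ?case by (simp add: Bc_def)
next
  case (Suc k)
  define h where "h = real cc * 2 ^ k"
  have hpos: "0 < h" unfolding h_def using cc_pos by simp
  have "\<exists>z. x < z \<and> z < x + h \<and> F k p (x + h) - F k p x = (x + h - x) * (- real p * F k (Suc p) z)"
    apply (rule MVT2)
    using hpos Suc.prems F_deriv by auto
  then obtain z where z: "x < z" "z < x + h" "F k p (x + h) - F k p x = h * (- real p * F k (Suc p) z)"
    by auto
  have Fe: "F (Suc k) p x = h * real p * F k (Suc p) z"
    using z(3) unfolding h_def by (simp add: algebra_simps)
  have zpos: "0 < z" using z Suc.prems by simp
  from Suc.IH[OF zpos, of "Suc p"]
  have lo: "Bc k (Suc p) / (z + real cc * (2 ^ k - 1)) ^ (Suc p + k) \<le> F k (Suc p) z"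
    and up: "F k (Suc p) z \<le> Bc k (Suc p) / z ^ (Suc p + k)" by auto
  have hp: "0 \<le> h * real p" using hpos by simp
  have BS: "Bc (Suc k) p = h * real p * Bc k (Suc p)" unfolding h_def Bc_Suc by simp
  have ex: "p + Suc k = Suc p + k" by simp
  have xz: "x ^ (Suc p + k) \<le> z ^ (Suc p + k)" using Suc.prems z by (intro power_mono) auto
  have a1: "Bc k (Suc p) / z ^ (Suc p + k) \<le> Bc k (Suc p) / x ^ (Suc p + k)"
    by (rule divide_left_mono[OF xz Bc_nonneg]) (use Suc.prems zpos in simp)
  have le: "z + real cc * (2 ^ k - 1) \<le> x + real cc * (2 ^ Suc k - 1)"
    using z(2) unfolding h_def by (simp add: algebra_simps)
  have "(1::real) \<le> 2 ^ k" by simp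
  then have zc: "0 < z + real cc * (2 ^ k - 1)" using zpos by (intro add_pos_nonneg) auto
  have le2: "(z + real cc * (2 ^ k - 1)) ^ (Suc p + k) \<le> (x + real cc * (2 ^ Suc k - 1)) ^ (Suc p + k)"
    using le zc by (intro power_mono) auto
  have a2: "Bc k (Suc p) / (x + real cc * (2 ^ Suc k - 1)) ^ (Suc p + k) \<le> Bc k (Suc p) / (z + real cc * (2 ^ k - 1)) ^ (Suc p + k)"
    by (rule divide_left_mono[OF le2 Bc_nonneg]) (use le zc in simp)
  show ?case unfolding Fe BS ex
  proof
    have "h * real p * Bc k (Suc p) / (x + real cc * (2 ^ Suc k - 1)) ^ (Suc p + k)
        = h * real p * (Bc k (Suc p) / (x + real cc * (2 ^ Suc k - 1)) ^ (Suc p + k))" by simp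
    also have "\<dots> \<le> h * real p * F k (Suc p) z"
      using a2 lo hp by (intro mult_left_mono) auto
    finally show "h * real p * Bc k (Suc p) / (x + real cc * (2 ^ Suc k - 1)) ^ (Suc p + k) \<le> h * real p * F k (Suc p) z" .
    have "h * real p * F k (Suc p) z \<le> h * real p * (Bc k (Suc p) / x ^ (Suc p + k))"
      using a1 up hp by (intro mult_left_mono) auto
    then show "h * real p * F k (Suc p) z \<le> h * real p * Bc k (Suc p) / x ^ (Suc p + k)" by simp
  qed
qed

definition Blk :: "nat \<Rightarrow> nat \<Rightarrow> nat set" where
  "Blk k n = {e. n \<le> e \<and> e < n + cc * 2 ^ k \<and> cc dvd (e - n)}"

lemma Blk_finite: "finite (Blk k n)"
  by (rule finite_subset[of _ "{..<n + cc * 2 ^ k}"]) (auto simp: Blk_def)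

lemma Blk_0: "Blk 0 n = {n}"
proof -
  have "e = n" if "n \<le> e" "e < n + cc" "cc dvd (e - n)" for e
  proof -
    have "e - n < cc" using that by simp
    then have "e - n = 0" using that(3) by (metis dvd_imp_le not_less zero_less_iff_neq_zero)
    then show ?thesis using that(1) by simp
  qed
  then show ?thesis unfolding Blk_def using cc_pos by auto
qed

lemma Blk_Suc: "Blk (Suc k) n = Blk k n \<union> Blk k (n + cc * 2 ^ k)"
proof -
  have "e \<in> Blk (Suc k) n \<longleftrightarrow> e \<in> Blk k n \<or> e \<in> Blk k (n + cc * 2 ^ k)" for e
  proof -
    have d: "cc dvd (e - n) \<longleftrightarrow> cc dvd (e - (n + cc * 2 ^ k))" if "n + cc * 2 ^ k \<le> e"
    proof -
      have "e - n = (e - (n + cc * 2 ^ k)) + cc * 2 ^ k" using that by simp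
      then show ?thesis by (metis dvd_add_left_iff dvd_triv_left)
    qed
    show ?thesis
    proof (cases "n + cc * 2 ^ k \<le> e")
      case True then show ?thesis unfolding Blk_def using d[OF True] by auto
    next
      case False then show ?thesis unfolding Blk_def by auto
    qed
  qed
  then show ?thesis by blast
qed

lemma Blk_Suc_disj: "Blk k n \<inter> Blk k (n + cc * 2 ^ k) = {}"
  unfolding Blk_def by auto

lemma Blk_gen:
  assumes "n \<ge> 1"
  shows "F k 1 (real n) \<in> PS (Blk k n)"
  using assms
proof (induction k arbitrary: n)
  case 0
  then show ?case using PS_single[of n] by (simp add: Blk_0)
next
  case (Suc k)
  have a: "F k 1 (real n) \<in> PS (Blk k n)" using Suc by blast
  have b: "- F k 1 (real (n + cc * 2 ^ k)) \<in> PS (Blk k (n + cc * 2 ^ k))"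
    using Suc.IH[of "n + cc * 2 ^ k"] Suc.prems by (intro PS_neg) auto
  have "F k 1 (real n) + - F k 1 (real (n + cc * 2 ^ k)) \<in> PS (Blk (Suc k) n)"
    unfolding Blk_Suc by (rule PS_add[OF Blk_finite Blk_finite Blk_Suc_disj a b])
  then show ?case by simp
qed

lemma Blk_range:
  assumes "e \<in> Blk j (b + q * (cc * 2 ^ j) + r)" "r < cc"
  shows "b + q * (cc * 2 ^ j) \<le> e \<and> e < b + Suc q * (cc * 2 ^ j)"
proof -
  define n where "n = b + q * (cc * 2 ^ j) + r"
  have e: "n \<le> e" "e < n + cc * 2 ^ j" "cc dvd (e - n)" using assms(1) unfolding Blk_def n_def by auto
  obtain t where t: "e - n = cc * t" using e(3) by blast
  have "cc * t < cc * 2 ^ j" using e(1,2) t by linarith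
  then have "t < 2 ^ j" using cc_pos by simp
  then have "t + 1 \<le> 2 ^ j" by simp
  then have "cc * (t + 1) \<le> cc * 2 ^ j" by (rule mult_le_mono2)
  then have "e + cc \<le> n + cc * 2 ^ j" using t e(1) by (simp add: algebra_simps)
  then show ?thesis using e(1) assms(2) unfolding n_def by (simp add: algebra_simps)
qed

lemma Blk_mod:
  assumes "e \<in> Blk j (b + q * (cc * 2 ^ j) + r)" "r < cc" "cc dvd b"
  shows "e mod cc = r"
proof -
  define n where "n = b + q * (cc * 2 ^ j) + r"
  have e: "n \<le> e" "cc dvd (e - n)" using assms(1) unfolding Blk_def n_def by auto
  have "e mod cc = n mod cc" using e by (metis mod_eq_dvd_iff_nat)
  also have "n mod cc = r"
  proof -
    have "cc dvd b + q * (cc * 2 ^ j)" using assms(3) by simp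
    then obtain w where "b + q * (cc * 2 ^ j) = cc * w" by blast
    then show ?thesis using assms(2) by (simp add: n_def)
  qed
  finally show ?thesis .
qed

lemma Blk_disj:
  assumes "r < cc" "r' < cc" "cc dvd b" "(q, r) \<noteq> (q', r')"
  shows "Blk j (b + q * (cc * 2 ^ j) + r) \<inter> Blk j (b + q' * (cc * 2 ^ j) + r') = {}"
proof (rule ccontr)
  assume "Blk j (b + q * (cc * 2 ^ j) + r) \<inter> Blk j (b + q' * (cc * 2 ^ j) + r') \<noteq> {}"
  then obtain e where e1: "e \<in> Blk j (b + q * (cc * 2 ^ j) + r)" and e2: "e \<in> Blk j (b + q' * (cc * 2 ^ j) + r')"
    by blast
  have "r = r'" using Blk_mod[OF e1 assms(1,3)] Blk_mod[OF e2 assms(2,3)] by simp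
  moreover have "q = q'"
  proof (rule ccontr)
    assume "q \<noteq> q'"
    define D where "D = cc * 2 ^ j"
    have r1: "b + q * D \<le> e" "e < b + Suc q * D" using Blk_range[OF e1 assms(1)] unfolding D_def by auto
    have r2: "b + q' * D \<le> e" "e < b + Suc q' * D" using Blk_range[OF e2 assms(2)] unfolding D_def by auto
    show False
    proof (cases "q < q'")
      case True
      then have "Suc q * D \<le> q' * D" by (intro mult_le_mono1) simp
      then show False using r1 r2 by simp
    next
      case False
      then have "q' < q" using \<open>q \<noteq> q'\<close> by simp
      then have "Suc q' * D \<le> q * D" by (intro mult_le_mono1) simp
      then show False using r1 r2 by simp
    qed
  qed
  ultimately show False using assms(4) by simp
qed



lemma Bc_1_2: "Bc j 2 = real (Suc j) * Bc j 1"
proof -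
  have "pochhammer (1::real) (Suc j) = 1 * pochhammer 2 j" by (simp add: pochhammer_rec)
  then have "pochhammer (2::real) j = fact (Suc j)" by (simp add: pochhammer_fact)
  moreover have "pochhammer (1::real) j = fact j" by (simp add: pochhammer_fact)
  ultimately show ?thesis unfolding Bc_def by (simp add: algebra_simps)
qed

lemma Bc_Suc_1: "Bc (Suc j) 1 = real cc * 2 ^ j * real (Suc j) * Bc j 1"
  using Bc_Suc[of j 1] Bc_1_2[of j] by (simp add: numeral_2_eq_2 algebra_simps)

lemma KI:
  assumes "1 \<le> j"
  shows "2 * real (j + 2) ^ (j + 2) \<le> real cc * real (j + 1) * real j ^ (j + 1)"
proof -
  have jp: "0 < real j" using assms by simp
  have "(1 + 2 / real j) ^ j \<le> exp 2"
    using exp_ge_one_plus_x_over_n_power_n[of j 2] assms by simp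
  also have "exp (2::real) = exp 1 * exp 1" by (simp add: exp_add[symmetric])
  also have "\<dots> \<le> 3 * 3" using exp_le by (intro mult_mono) auto
  finally have a: "(1 + 2 / real j) ^ j \<le> 9" by simp
  have "1 + 2 / real j = real (j + 2) / real j" using jp by (simp add: field_simps)
  then have "(1 + 2 / real j) ^ j = real (j + 2) ^ j / real j ^ j"
    by (simp add: power_divide)
  then have b: "real (j + 2) ^ j \<le> 9 * real j ^ j" using a jp by (simp add: field_simps)
  have j1: "1 \<le> real j" using assms by simp
  have jj: "1 \<le> real j * real j" using mult_mono[OF j1 j1] by simp
  have e1: "18 * real (j+2)^2 = 18*(real j*real j) + 72*real j + 72" by (simp add: power2_eq_square algebra_simps)
  have e2: "128*(real j*real (j+1)) = 128*(real j*real j) + 128*real j" by (simp add: algebra_simps)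
  have c: "18 * real (j + 2) ^ 2 \<le> 128 * (real j * real (j + 1))"
    unfolding e1 e2 using jj j1 by linarith
  have "2 * real (j + 2) ^ (j + 2) = 2 * (real (j + 2) ^ j * real (j + 2) ^ 2)"
    by (metis power_add)
  also have "\<dots> \<le> 2 * (9 * real j ^ j * real (j + 2) ^ 2)"
    using b by (intro mult_left_mono mult_right_mono) auto
  also have "\<dots> = real j ^ j * (18 * real (j + 2) ^ 2)" by simp
  also have "\<dots> \<le> real j ^ j * (128 * (real j * real (j + 1)))"
    using c by (intro mult_left_mono) auto
  also have "\<dots> = real cc * real (j + 1) * real j ^ (j + 1)"
    by (simp add: cc_def algebra_simps)
  finally show ?thesis .
qed

locale lay =
  fixes K m :: nat
  assumes K1: "1 \<le> K" and m1: "1 \<le> m"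
begin

definition X0 where "X0 = cc * 2 ^ K * m"
definition II where "II j = {..<m * 2 ^ (K - j)} \<times> {..<cc}"
definition st where "st j i = j * X0 + fst i * (cc * 2 ^ j) + snd i"
definition A where "A j i = Blk j (st j i)"
definition g where "g j i = F j 1 (real (st j i))"
definition Lv where "Lv j = (\<Union>i\<in>II j. A j i)"
definition U where "U j = (\<Union>l\<in>{j..K}. Lv l)"
definition up where "up j = Bc j 1 / (real j * real X0) ^ (j + 1)"
definition lo where "lo j = Bc j 1 / (real (Suc j) * real X0) ^ (j + 1)"

lemma X0_ge: "2 * cc \<le> X0"
proof -
  have "2 \<le> (2::nat) ^ K" using K1 by (metis power_one_right power_increasing zero_less_numeral one_le_numeral)
  then have "2 * 1 \<le> 2 ^ K * m" using m1 by (intro mult_le_mono) auto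
  then show ?thesis unfolding X0_def by (simp add: algebra_simps)
qed

lemma X0_pos: "0 < X0" using X0_ge cc_pos by simp

lemma X0_split: "j \<le> K \<Longrightarrow> m * 2 ^ (K - j) * (cc * 2 ^ j) = X0"
  unfolding X0_def by (simp add: algebra_simps power_add[symmetric])

lemma finite_II: "finite (II j)" unfolding II_def by simp

lemma card_II: "card (II j) = m * 2 ^ (K - j) * cc"
  unfolding II_def by (simp add: card_cartesian_product)

lemma cc_dvd: "cc dvd j * X0" unfolding X0_def by simp

lemma A_range:
  assumes "j \<le> K" "i \<in> II j" "e \<in> A j i"
  shows "j * X0 \<le> e \<and> e < Suc j * X0"
proof -
  obtain q r where i: "i = (q, r)" by (cases i)
  have qr: "q < m * 2 ^ (K - j)" "r < cc" using assms(2) unfolding II_def i by auto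
  have "e \<in> Blk j (j * X0 + q * (cc * 2 ^ j) + r)" using assms(3) unfolding A_def st_def i by simp
  from Blk_range[OF this qr(2)]
  have e: "j * X0 + q * (cc * 2 ^ j) \<le> e" "e < j * X0 + Suc q * (cc * 2 ^ j)" by auto
  have "Suc q * (cc * 2 ^ j) \<le> m * 2 ^ (K - j) * (cc * 2 ^ j)"
    using qr(1) by (intro mult_le_mono1) simp
  then have "Suc q * (cc * 2 ^ j) \<le> X0" using X0_split[OF assms(1)] by simp
  then show ?thesis using e by simp
qed

lemma A_disj:
  assumes "i \<in> II j" "i' \<in> II j" "i \<noteq> i'"
  shows "A j i \<inter> A j i' = {}"
proof -
  obtain q r where i: "i = (q, r)" by (cases i)
  obtain q' r' where i': "i' = (q', r')" by (cases i')
  have "r < cc" "r' < cc" using assms unfolding II_def i i' by auto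
  then show ?thesis unfolding A_def st_def i i' using Blk_disj[OF _ _ cc_dvd, of r r' q q' j j] assms(3) i i'
    by simp
qed

lemma A_finite: "finite (A j i)" unfolding A_def by (rule Blk_finite)

lemma g_PS: assumes "1 \<le> j" shows "g j i \<in> PS (A j i)"
proof -
  have "1 * X0 \<le> j * X0" using assms by (intro mult_le_mono1)
  then have "1 \<le> st j i" unfolding st_def using X0_pos by linarith
  then show ?thesis unfolding g_def A_def by (rule Blk_gen)
qed

lemma st_upper:
  assumes "j \<le> K" "i \<in> II j"
  shows "real (st j i) + real cc * (2 ^ j - 1) \<le> real (Suc j) * real X0"
proof -
  obtain q r where i: "i = (q, r)" by (cases i)
  have qr: "q < m * 2 ^ (K - j)" "r < cc" using assms(2) unfolding II_def i by auto
  have "Suc q * (cc * 2 ^ j) \<le> m * 2 ^ (K - j) * (cc * 2 ^ j)"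
    using qr(1) by (intro mult_le_mono1) simp
  then have "Suc q * (cc * 2 ^ j) \<le> X0" using X0_split[OF assms(1)] by simp
  then have "st j i + cc * 2 ^ j \<le> Suc j * X0 + cc" unfolding st_def i using qr(2) by simp
  then have "real (st j i + cc * 2 ^ j) \<le> real (Suc j * X0 + cc)" by linarith
  then show ?thesis by (simp add: algebra_simps)
qed

lemma g_bounds:
  assumes "1 \<le> j" "j \<le> K" "i \<in> II j"
  shows "lo j \<le> g j i \<and> g j i \<le> up j"
proof -
  have s1: "real j * real X0 \<le> real (st j i)" unfolding st_def by simp
  have p1: "0 < real j * real X0" using assms X0_pos by simp
  have sp: "0 < real (st j i)" using s1 p1 by linarith
  from F_bounds[OF sp, of j 1]
  have f: "Bc j 1 / (real (st j i) + real cc * (2 ^ j - 1)) ^ (1 + j) \<le> g j i"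
          "g j i \<le> Bc j 1 / real (st j i) ^ (1 + j)" unfolding g_def by auto
  have q: "0 < real (st j i) + real cc * (2 ^ j - 1)"
    using sp by (intro add_pos_nonneg) auto
  have "(real (st j i) + real cc * (2 ^ j - 1)) ^ (1 + j) \<le> (real (Suc j) * real X0) ^ (1 + j)"
    using st_upper[OF assms(2,3)] q by (intro power_mono) auto
  moreover have "0 < (real (Suc j) * real X0) ^ (1 + j) * (real (st j i) + real cc * (2 ^ j - 1)) ^ (1 + j)"
    using q X0_pos by (intro mult_pos_pos zero_less_power) auto
  ultimately have "lo j \<le> Bc j 1 / (real (st j i) + real cc * (2 ^ j - 1)) ^ (1 + j)"
    unfolding lo_def by (intro divide_left_mono Bc_nonneg) auto
  moreover have "Bc j 1 / real (st j i) ^ (1 + j) \<le> up j"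
  proof -
    have "(real j * real X0) ^ (1 + j) \<le> real (st j i) ^ (1 + j)"
      using s1 p1 by (intro power_mono) auto
    then show ?thesis unfolding up_def by (intro divide_left_mono Bc_nonneg) (use p1 sp in auto)
  qed
  ultimately show ?thesis using f by simp
qed

lemma lo_nonneg: "0 \<le> lo j" unfolding lo_def using Bc_nonneg by simp

lemma U_range: assumes "j \<le> K" "e \<in> U j" shows "j * X0 \<le> e \<and> e < Suc K * X0"
proof -
  from assms(2) obtain l i where l: "l \<in> {j..K}" "i \<in> II l" "e \<in> A l i"
    unfolding U_def Lv_def by auto
  have "l * X0 \<le> e \<and> e < Suc l * X0" using A_range[OF _ l(2,3)] l(1) by auto
  moreover have "j * X0 \<le> l * X0" "Suc l * X0 \<le> Suc K * X0" using l(1) by (auto intro: mult_le_mono1)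
  ultimately show ?thesis by linarith
qed

lemma U_finite: "finite (U j)"
  unfolding U_def Lv_def using finite_II A_finite by auto

end



lemma aux_alg:
  fixes X Y Q a b B :: real
  assumes "0 < X" "0 < Y" "0 < Q"
  shows "(X / 2) * (a * b * B) / (Q * (X * Y)) = B / Y * (a * b / (2 * Q))"
  using assms by (simp add: field_simps)

lemma aux_frac:
  fixes a b c :: real
  assumes "0 < a" "0 < c" "c \<le> b * a"
  shows "1 / a \<le> b / c"
  using assms by (simp add: field_simps)

context lay
begin

lemma up_nonneg: "0 \<le> up j" unfolding up_def using Bc_nonneg by simp

lemma level_cond:
  assumes "1 \<le> j" "j < K"
  shows "up j \<le> real (card (II (Suc j))) * lo (Suc j)"
proof -
  define B where "B = Bc j 1"
  define X where "X = real X0"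
  define c where "c = real (card (II (Suc j)))"
  have Xp: "0 < X" unfolding X_def using X0_pos by simp
  have jp: "0 < real j" using assms by simp
  have Bn: "0 \<le> B" unfolding B_def by (rule Bc_nonneg)
  have "m * 2 ^ (K - Suc j) * (cc * 2 ^ Suc j) = X0" using X0_split[of "Suc j"] assms by simp
  moreover have "real (m * 2 ^ (K - Suc j) * cc) * 2 ^ Suc j = real (m * 2 ^ (K - Suc j) * (cc * 2 ^ Suc j))"
    by (simp add: ac_simps)
  ultimately have "real (m * 2 ^ (K - Suc j) * cc) * 2 ^ Suc j = X" unfolding X_def by simp
  then have hc: "c * 2 ^ j = X / 2" unfolding c_def card_II by (simp add: field_simps)
  have "c * lo (Suc j) = c * (real cc * 2 ^ j * real (Suc j) * B) / ((real (Suc (Suc j)) * X) ^ (Suc j + 1))"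
    unfolding lo_def Bc_Suc_1 B_def X_def by simp
  also have "\<dots> = (c * 2 ^ j) * (real cc * real (Suc j) * B) / (real (Suc (Suc j)) ^ (j + 2) * X ^ (j + 2))"
  proof -
    have "(real (Suc (Suc j)) * X) ^ (Suc j + 1) = real (Suc (Suc j)) ^ (j + 2) * X ^ (j + 2)"
      by (simp add: power_mult_distrib)
    moreover have "c * (real cc * 2 ^ j * real (Suc j) * B) = (c * 2 ^ j) * (real cc * real (Suc j) * B)"
      by (simp add: ac_simps)
    ultimately show ?thesis by (simp only:)
  qed
  also have "\<dots> = (X / 2) * (real cc * real (Suc j) * B) / (real (Suc (Suc j)) ^ (j + 2) * X ^ (j + 2))"
    unfolding hc ..
  also have "\<dots> = B / X ^ (j + 1) * (real cc * real (j + 1) / (2 * real (j + 2) ^ (j + 2)))"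
  proof -
    have "X ^ (j + 2) = X * X ^ (j + 1)" by simp
    then show ?thesis using aux_alg[OF Xp, of "X ^ (j + 1)" "real (Suc (Suc j)) ^ (j + 2)" "real cc" "real (Suc j)" B] Xp
      by simp
  qed
  finally have R: "c * lo (Suc j) = B / X ^ (j + 1) * (real cc * real (j + 1) / (2 * real (j + 2) ^ (j + 2)))" .
  have L: "up j = B / X ^ (j + 1) * (1 / real j ^ (j + 1))"
    unfolding up_def B_def X_def by (simp add: power_mult_distrib)
  have "1 / real j ^ (j + 1) \<le> real cc * real (j + 1) / (2 * real (j + 2) ^ (j + 2))"
    by (rule aux_frac[OF _ _ KI[OF assms(1)]]) (use jp in auto)
  then have "up j \<le> c * lo (Suc j)" unfolding L R
    by (intro mult_left_mono) (use Bn Xp in auto)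
  then show ?thesis unfolding c_def .
qed

lemma chain:
  assumes "1 \<le> j" "j \<le> K"
  shows "\<exists>R. cov (U j) R (up K) \<and> real (card (II j)) * lo j \<le> R"
  using assms(2,1)
proof (induction j rule: inc_induct)
  case base
  have c: "cov ({} \<union> (\<Union>i\<in>II K. A K i)) (up K + (\<Sum>i\<in>II K. g K i)) (up K)"
  proof (rule cov_fam[OF finite_II cov_empty])
    fix i assume i: "i \<in> II K"
    show "finite (A K i)" by (rule A_finite)
    show "g K i \<in> PS (A K i)" using K1 by (rule g_PS)
    show "0 \<le> g K i \<and> g K i \<le> up K" using g_bounds[OF K1 _ i] lo_nonneg[of K] by auto
  qed (auto simp: A_disj)
  have UK: "U K = {} \<union> (\<Union>i\<in>II K. A K i)" unfolding U_def Lv_def by simp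
  have "real (card (II K)) * lo K \<le> (\<Sum>i\<in>II K. g K i)"
    by (rule sum_bounded_below) (use g_bounds K1 in auto)
  then show ?case using c up_nonneg[of K] unfolding UK by (intro exI[of _ "up K + (\<Sum>i\<in>II K. g K i)"]) auto
next
  case (step n)
  then obtain R where R: "cov (U (Suc n)) R (up K)" "real (card (II (Suc n))) * lo (Suc n) \<le> R"
    by auto
  have Rge: "up n \<le> R" using level_cond[OF step(4) step(2)] R(2) by linarith
  have c: "cov (U (Suc n) \<union> (\<Union>i\<in>II n. A n i)) (R + (\<Sum>i\<in>II n. g n i)) (up K)"
  proof (rule cov_fam[OF finite_II R(1) U_finite])
    fix i assume i: "i \<in> II n"
    show "finite (A n i)" by (rule A_finite)
    show "g n i \<in> PS (A n i)" using step(4) by (rule g_PS)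
    show "0 \<le> g n i \<and> g n i \<le> R" using g_bounds[OF step(4) _ i] lo_nonneg[of n] Rge step(2) by auto
    show "A n i \<inter> U (Suc n) = {}"
    proof (rule ccontr)
      assume "A n i \<inter> U (Suc n) \<noteq> {}"
      then obtain e where e: "e \<in> A n i" "e \<in> U (Suc n)" by blast
      have "e < Suc n * X0" using A_range[OF _ i e(1)] step(2) by simp
      moreover have "Suc n * X0 \<le> e" using U_range[OF _ e(2)] step(2) by simp
      ultimately show False by simp
    qed
  qed (auto simp: A_disj)
  have Un: "U n = U (Suc n) \<union> (\<Union>i\<in>II n. A n i)"
  proof -
    have "{n..K} = insert n {Suc n..K}" using step(2) by auto
    then show ?thesis unfolding U_def Lv_def by auto
  qed
  have "real (card (II n)) * lo n \<le> (\<Sum>i\<in>II n. g n i)"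
    by (rule sum_bounded_below) (use g_bounds step in auto)
  moreover have "0 \<le> R" using R(2) lo_nonneg[of "Suc n"] by (meson mult_nonneg_nonneg of_nat_0_le_iff order_trans)
  ultimately show ?case using c unfolding Un by (intro exI[of _ "R + (\<Sum>i\<in>II n. g n i)"]) auto
qed

lemma final:
  assumes "Suc K * X0 \<le> N" "\<bar>\<tau>\<bar> + 1 \<le> (\<Sum>n=1..X0 - 1. 1 / real n)"
  shows "min_dist N \<tau> \<le> up K"
proof -
  obtain R where R: "cov (U 1) R (up K)" "real (card (II 1)) * lo 1 \<le> R"
    using chain[of 1] K1 by auto
  have X2: "2 \<le> X0" using X0_ge cc_pos by simp
  have B11: "Bc 1 1 = real cc" using Bc_Suc_1[of 0] by (simp add: Bc_def)
  have "m * 2 ^ (K - 1) * (cc * 2 ^ 1) = X0" using X0_split[of 1] K1 by simp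
  moreover have "real (m * 2 ^ (K - 1) * cc) * 2 = real (m * 2 ^ (K - 1) * (cc * 2 ^ 1))"
    by (simp add: ac_simps)
  ultimately have hc: "real (card (II 1)) * 2 = real X0" unfolding card_II by simp
  have "real (card (II 1)) * lo 1 = (real (card (II 1)) * 2) * real cc / (8 * real X0 ^ 2)"
    unfolding lo_def B11 by (simp add: power2_eq_square field_simps)
  also have "\<dots> = 16 / real X0" unfolding hc using X2 by (simp add: cc_def power2_eq_square)
  finally have "16 / real X0 \<le> R" using R(2) by simp
  moreover have "1 / real (X0 - 1) \<le> 16 / real X0" using X2 by (simp add: field_simps of_nat_diff)
  ultimately have R1: "1 / real (X0 - 1) \<le> R" by (rule order_trans[rotated])
  have disj: "U 1 \<inter> {1..X0 - 1} = {}"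
    using U_range[of 1] K1 by fastforce
  have c: "cov (U 1 \<union> {1..X0 - 1}) (R + (\<Sum>n=1..X0 - 1. 1 / real n)) (up K)"
    by (rule cov_harm[OF R(1) U_finite disj _ R1]) (use X2 in simp)
  have R0: "0 \<le> R" using R1 X2 by (smt (verit) divide_nonneg_nonneg of_nat_0_le_iff)
  define S where "S = U 1 \<union> {1..X0 - 1}"
  have Ssub: "S \<subseteq> {1..N}"
  proof
    fix e assume "e \<in> S"
    then consider "e \<in> U 1" | "e \<in> {1..X0 - 1}" unfolding S_def by auto
    then show "e \<in> {1..N}"
    proof cases
      case 1
      then have "X0 \<le> e \<and> e < Suc K * X0" using U_range[of 1] K1 by auto
      then show ?thesis using assms(1) X2 by auto
    next
      case 2
      have "X0 \<le> Suc K * X0" by simp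
      then show ?thesis using 2 assms(1) by auto
    qed
  qed
  define Lf where "Lf = {1..N} - S"
  have "\<exists>y\<in>PS Lf. \<bar>y\<bar> \<le> 1 / real X0"
    by (rule PS_small) (use X2 in \<open>auto simp: Lf_def S_def\<close>)
  then obtain yL where yL: "yL \<in> PS Lf" "\<bar>yL\<bar> \<le> 1 / real X0" by auto
  have "1 / real X0 \<le> 1" using X2 by simp
  then have "\<bar>\<tau> - yL\<bar> \<le> R + (\<Sum>n=1..X0 - 1. 1 / real n)" using yL(2) assms(2) R0 by linarith
  then obtain y where y: "y \<in> PS S" "\<bar>(\<tau> - yL) - y\<bar> \<le> up K"
    using c unfolding cov_def S_def by blast
  have fS: "finite S" unfolding S_def using U_finite by simp
  have "y + yL \<in> PS (S \<union> Lf)"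
    by (rule PS_add[OF fS _ _ y(1) yL(1)]) (auto simp: Lf_def)
  moreover have "S \<union> Lf = {1..N}" using Ssub unfolding Lf_def by auto
  ultimately have "min_dist N \<tau> \<le> \<bar>y + yL - \<tau>\<bar>" using min_dist_le by simp
  also have "\<dots> = \<bar>(\<tau> - yL) - y\<bar>" by (simp add: abs_minus_commute algebra_simps)
  finally show ?thesis using y(2) by linarith
qed

end



lemma sum_lessThan_double: "2 * (\<Sum>{..<K}) = K * (K - 1::nat)"
proof (induction K)
  case 0 then show ?case by simp
next
  case (Suc K)
  have "2 * (\<Sum>{..<Suc K}) = 2 * (\<Sum>{..<K}) + 2 * K" by simp
  also have "\<dots> = K * (K - 1) + 2 * K" using Suc by simp
  also have "\<dots> = Suc K * (Suc K - 1)" by (cases K) (auto simp: algebra_simps)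
  finally show ?case .
qed

lemma phi_bound:
  fixes k x a :: real
  assumes "1 \<le> k" "a * x / ln 2 - 1 \<le> k" "k \<le> a * x / ln 2" "0 < a" "a < 1" "k \<le> 2 * x" "0 < x"
  shows "k * ln 128 + (k * (k - 1) / 2) * ln 2 + k * ln k - (k + 1) * (x - ln 4)
    \<le> - ((a - a ^ 2 / 2) / ln 2) * x ^ 2 + (2 * x * ln 128 + 2 * x * ln (2 * x) + 2 * x * ln 4 + ln 4 + x + ln 2 / 2)"
proof -
  define l where "l = ln (2::real)"
  have l: "2/3 \<le> l" unfolding l_def by (rule ln2_ge_two_thirds)
  define k0 where "k0 = a * x / l - 1"
  have kk0: "k0 \<le> k" using assms(2) unfolding k0_def l_def .
  have kl: "k * l \<le> a * x" using assms(3) l unfolding l_def by (simp add: field_simps)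
  have "(k + k0) * l / 2 \<le> k * l" using kk0 l by (simp add: field_simps)
  also have "\<dots> \<le> x" using kl assms(5,7) by (smt (verit) mult_less_cancel_right2)
  finally have s: "(k + k0) * l / 2 - x \<le> 0" by simp
  have hk: "k^2 * l / 2 - k * x - (k0^2 * l / 2 - k0 * x) = (k - k0) * ((k + k0) * l / 2 - x)"
    by (simp add: power2_eq_square field_simps)
  have "(k - k0) * ((k + k0) * l / 2 - x) \<le> 0" using kk0 s by (intro mult_nonneg_nonpos) auto
  then have h1: "k^2 * l / 2 - k * x \<le> k0^2 * l / 2 - k0 * x" using hk by linarith
  have h2: "k0^2 * l / 2 - k0 * x = - ((a - a ^ 2 / 2) / l) * x ^ 2 + (1 - a) * x + l / 2"
    unfolding k0_def using l by (simp add: field_simps power2_eq_square)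
  have lk: "0 \<le> ln k" using assms(1) by simp
  have l2x: "0 \<le> ln (2 * x)" using assms(1,6) by simp
  have "ln k \<le> ln (2 * x)" using assms(1,6) by simp
  then have "k * ln k \<le> k * ln (2 * x)" using assms(1) by (intro mult_left_mono) auto
  also have "\<dots> \<le> 2 * x * ln (2 * x)" using assms(6) l2x by (intro mult_right_mono) auto
  finally have t1: "k * ln k \<le> 2 * x * ln (2 * x)" .
  have t2: "k * ln 128 \<le> 2 * x * ln 128" using assms(6) by (intro mult_right_mono) auto
  have t3: "k * ln 4 \<le> 2 * x * ln 4" using assms(6) by (intro mult_right_mono) auto
  have t4: "0 \<le> k * l" using assms(1) l by simp
  have eq: "k * ln 128 + (k * (k - 1) / 2) * l + k * ln k - (k + 1) * (x - ln 4)
      = (k^2 * l / 2 - k * x) - k * l / 2 + k * ln 128 + k * ln k - x + k * ln 4 + ln 4"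
    by (simp add: power2_eq_square field_simps)
  have "(1 - a) * x \<le> x" using assms(4,7) by simp
  then show ?thesis using eq h1 h2 t1 t2 t3 t4 assms(7) unfolding l_def[symmetric] by linarith
qed



lemma per_N:
  fixes N :: nat and a C \<tau> x :: real
  assumes N2: "2 \<le> N" and xdef: "x = ln (real N)" and a: "0 < a" "a < 1"
    and i: "1 \<le> a * x / ln 2"
    and ii: "ln 256 + ln (2 * x + 1) \<le> (1 - a) * x"
    and iii: "ln (4 * x + 2) + \<bar>\<tau>\<bar> + 1 \<le> x"
    and iv: "2 * x * ln 128 + 2 * x * ln (2 * x) + 2 * x * ln 4 + ln 4 + x + ln 2 / 2 < ((a - a ^ 2 / 2) / ln 2 - C) * x ^ 2"
  shows "min_dist N \<tau> < exp (- C * (ln (real N)) ^ 2)"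
proof -
  define l where "l = ln (2::real)"
  have l: "2/3 \<le> l" unfolding l_def by (rule ln2_ge_two_thirds)
  have Nr: "2 \<le> real N" using N2 by simp
  have xpos: "0 < x" unfolding xdef using N2 by simp
  have Nx: "real N = exp x" unfolding xdef using N2 by simp
  define K where "K = nat \<lfloor>a * x / l\<rfloor>"
  have "(1::int) \<le> \<lfloor>a * x / l\<rfloor>" using i unfolding l_def by (simp add: le_floor_iff)
  then have K1: "1 \<le> K" unfolding K_def by linarith
  have rK: "real K = real_of_int \<lfloor>a * x / l\<rfloor>" unfolding K_def using K1 K_def by simp
  have fc: "real_of_int \<lfloor>a * x / l\<rfloor> \<le> a * x / l \<and> a * x / l < real_of_int (\<lfloor>a * x / l\<rfloor> + 1)"
    by (rule floor_correct)
  have Kle: "real K \<le> a * x / l" using rK fc by linarith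
  have Kge: "a * x / l - 1 \<le> real K" using rK fc by simp
  have K2x: "real K \<le> 2 * x"
  proof -
    have "a * x / l \<le> x / l" using a xpos l by (simp add: divide_right_mono)
    also have "\<dots> \<le> 2 * x" using xpos l by (simp add: field_simps)
    finally show ?thesis using Kle by simp
  qed
  have KlI: "real K * l \<le> a * x" using Kle l by (simp add: field_simps)
  have p2K: "real (2 ^ K :: nat) \<le> exp (a * x)"
  proof -
    have "real (2 ^ K :: nat) = exp (real K * l)" unfolding l_def
      by (simp add: exp_of_nat_mult)
    also have "\<dots> \<le> exp (a * x)" using KlI by simp
    finally show ?thesis .
  qed
  define D where "D = (K + 1) * cc * 2 ^ K"
  have Dpos: "0 < D" unfolding D_def using cc_pos by simp
  have D2: "2 * real D \<le> real N"
  proof -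
    have "2 * real D = 256 * real (K + 1) * real (2 ^ K :: nat)" unfolding D_def cc_def by simp
    also have "\<dots> \<le> 256 * (2 * x + 1) * exp (a * x)"
      using p2K K2x by (intro mult_mono) auto
    also have "\<dots> = exp (ln 256 + ln (2 * x + 1) + a * x)"
      using xpos by (simp add: exp_add)
    also have "\<dots> \<le> exp x" using ii by (simp add: algebra_simps)
    finally show ?thesis using Nx by simp
  qed
  define m where "m = N div D"
  have DN: "D \<le> N" using D2 Dpos by linarith
  have m1: "1 \<le> m" unfolding m_def using DN Dpos using div_le_mono[OF DN, of D] by simp
  interpret lay K m using K1 m1 by unfold_locales
  have X0eq: "Suc K * X0 = m * D" unfolding X0_def D_def by (simp add: algebra_simps)
  have "m * D \<le> N" unfolding m_def by (rule div_times_less_eq_dividend)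
  then have SK: "Suc K * X0 \<le> N" using X0eq by simp
  have mD: "real N / 2 \<le> real (m * D)"
  proof -
    have "N = m * D + N mod D" unfolding m_def by simp
    moreover have "N mod D < D" using Dpos by simp
    ultimately have "real N \<le> real (m * D) + real D" by linarith
    then show ?thesis using D2 by linarith
  qed
  have X0low: "real N / (2 * real (K + 1)) \<le> real X0"
  proof -
    have "real N / 2 \<le> real (K + 1) * real X0" using mD X0eq
      by (metis Suc_eq_plus1 of_nat_mult)
    then show ?thesis by (simp add: field_simps)
  qed
  have X0pos: "0 < real X0" using X0_pos by simp
  have Kp: "0 < real (K + 1)" by simp
  have harm: "\<bar>\<tau>\<bar> + 1 \<le> (\<Sum>n=1..X0 - 1. 1 / real n)"
  proof -
    have h: "(\<Sum>n=1..X0 - 1. 1 / real n) = harm (X0 - 1)"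
      unfolding harm_def by (simp add: inverse_eq_divide)
    have "ln (real (X0 - 1) + 1) \<le> harm (X0 - 1)" by (rule ln_le_harm)
    moreover have "real (X0 - 1) + 1 = real X0" using X0_pos by (simp add: of_nat_diff)
    ultimately have h1: "ln (real X0) \<le> (\<Sum>n=1..X0 - 1. 1 / real n)" using h by simp
    have "ln (real N / (2 * real (K + 1))) \<le> ln (real X0)"
      using X0low Nr Kp X0pos by (subst ln_le_cancel_iff) auto
    moreover have "ln (real N / (2 * real (K + 1))) = x - ln (2 * real (K + 1))"
      unfolding xdef using Nr Kp by (simp add: ln_div)
    moreover have "ln (2 * real (K + 1)) \<le> ln (4 * x + 2)"
      using K2x by (subst ln_le_cancel_iff) auto
    ultimately show ?thesis using h1 iii by linarith
  qed
  have md: "min_dist N \<tau> \<le> up K" by (rule final[OF SK harm])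
  have KX: "real N / 4 \<le> real K * real X0"
  proof -
    have "real N / 4 \<le> real K * (real N / (2 * real (K + 1)))"
      using K1 Nr by (simp add: field_simps)
    also have "\<dots> \<le> real K * real X0" using X0low by (intro mult_left_mono) auto
    finally show ?thesis .
  qed
  define S where "S = (\<Sum>{..<K})"
  have S2: "2 * real S = real K * (real K - 1)"
  proof -
    have "2 * S = K * (K - 1)" unfolding S_def by (rule sum_lessThan_double)
    then have "real (2 * S) = real (K * (K - 1))" by simp
    then show ?thesis using K1 by (simp add: of_nat_diff)
  qed
  have Bc_eq: "Bc K 1 = 128 ^ K * 2 ^ S * fact K"
    unfolding Bc_def S_def cc_def by (simp add: pochhammer_fact)
  have factK: "fact K \<le> real K ^ K" using fact_le_power[of K] by simp
  have Bpos: "0 < Bc K 1" unfolding Bc_eq by simp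
  have "up K \<le> Bc K 1 / (real N / 4) ^ (K + 1)"
    unfolding up_def using KX Nr Bpos K1 X0_pos
    by (intro divide_left_mono power_mono mult_pos_pos zero_less_power) auto
  also have "\<dots> = exp (ln (Bc K 1) - real (K + 1) * (x - ln 4))"
  proof -
    have "ln ((real N / 4) ^ (K + 1)) = real (K + 1) * ln (real N / 4)"
      by (rule ln_realpow)
    moreover have "ln (real N / 4) = x - ln 4" unfolding xdef using Nr by (simp add: ln_div)
    ultimately have "ln ((real N / 4) ^ (K + 1)) = real (K + 1) * (x - ln 4)" by simp
    moreover have "0 < (real N / 4) ^ (K + 1)" using Nr by simp
    moreover have "\<And>P. 0 < P \<Longrightarrow> Bc K 1 / P = exp (ln (Bc K 1) - ln P)"
      using Bpos by (simp add: exp_diff)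
    ultimately show ?thesis by metis
  qed
  also have "\<dots> \<le> exp (real K * ln 128 + (real K * (real K - 1) / 2) * ln 2 + real K * ln (real K) - (real K + 1) * (x - ln 4))"
  proof -
    have "ln (Bc K 1) = ln (128 ^ K) + ln (2 ^ S) + ln (fact K)"
      unfolding Bc_eq by (simp add: ln_mult)
    also have "\<dots> = real K * ln 128 + real S * ln 2 + ln (fact K)"
      by (simp add: ln_realpow)
    finally have e1: "ln (Bc K 1) = real K * ln 128 + real S * ln 2 + ln (fact K)" .
    have "ln (fact K) \<le> ln (real K ^ K)"
      using factK by (subst ln_le_cancel_iff) auto
    also have "ln (real K ^ K) = real K * ln (real K)" by (simp add: ln_realpow)
    finally have f: "ln (Bc K 1) \<le> real K * ln 128 + real S * ln 2 + real K * ln (real K)" using e1 by linarith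
    have "real S = real K * (real K - 1) / 2" using S2 by simp
    then have "real S * ln 2 = (real K * (real K - 1) / 2) * ln 2" by simp
    then have "ln (Bc K 1) \<le> real K * ln 128 + (real K * (real K - 1) / 2) * ln 2 + real K * ln (real K)"
      using f by linarith
    then show ?thesis by (simp add: ring_distribs)
  qed
  also have "\<dots> < exp (- C * x ^ 2)"
  proof -
    have "real K * ln 128 + (real K * (real K - 1) / 2) * ln 2 + real K * ln (real K) - (real K + 1) * (x - ln 4)
      \<le> - ((a - a ^ 2 / 2) / ln 2) * x ^ 2 + (2 * x * ln 128 + 2 * x * ln (2 * x) + 2 * x * ln 4 + ln 4 + x + ln 2 / 2)"
      by (rule phi_bound) (use K1 Kge Kle a K2x xpos in \<open>auto simp: l_def\<close>)
    also have "\<dots> < - C * x ^ 2" using iv by (simp add: algebra_simps)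
    finally show ?thesis by simp
  qed
  finally show ?thesis using md unfolding xdef by simp
qed



theorem theorem1p1:
  fixes \<tau> C :: real
  assumes "0 < C" and "C < 1 / ln 4"
  shows "\<exists>N0::nat. \<forall>N\<ge>N0. min_dist N \<tau> < exp (- C * (ln (real N))^2)"
proof -
  have ln4: "0 < ln (4::real)" by simp
  have ln42: "ln (4::real) = 2 * ln 2"
  proof -
    have "ln (4::real) = ln (2 * 2)" by simp
    also have "\<dots> = ln 2 + ln 2" by (simp only: ln_mult) simp
    finally show ?thesis by simp
  qed
  have l2: "0 < ln (2::real)" by simp
  have Cl: "C * ln 4 < 1" using assms ln4 by (simp add: field_simps)
  define \<eta> where "\<eta> = (1 - C * ln 4) / 2"
  have e0: "0 < \<eta>" unfolding \<eta>_def using Cl by simp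
  have e1: "\<eta> < 1 / 2" unfolding \<eta>_def using assms(1) ln4 by simp
  define a where "a = 1 - \<eta>"
  have a0: "0 < a" "a < 1" unfolding a_def using e0 e1 by auto
  define b where "b = (a - a ^ 2 / 2) / ln 2"
  have bC: "C < b"
  proof -
    have "b * ln 4 = 1 - \<eta> ^ 2" unfolding b_def a_def ln42 using l2
      by (simp add: field_simps power2_eq_square)
    moreover have "C * ln 4 = 1 - 2 * \<eta>" unfolding \<eta>_def by (simp add: field_simps)
    moreover have "\<eta> ^ 2 < 2 * \<eta>" using e0 e1 by (simp add: power2_eq_square)
    ultimately have "C * ln 4 < b * ln 4" by simp
    then show ?thesis using ln4 by simp
  qed
  have h12: "(0::real) < 1/2" by simp
  have bC': "0 < b - C" using bC by simp
  define G where "G x = 2 * x * ln 128 + 2 * x * ln (2 * x) + 2 * x * ln 4 + ln 4 + x + ln 2 / 2" for x :: real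
  have lim1: "((\<lambda>x::real. (ln 256 + ln (2 * x + 1)) / x) \<longlongrightarrow> 0) at_top" by real_asymp
  have lim2: "((\<lambda>x::real. ln (4 * x + 2) / x) \<longlongrightarrow> 0) at_top" by real_asymp
  have lim4: "((\<lambda>x::real. (2 * x * ln 128 + 2 * x * ln (2 * x) + 2 * x * ln 4 + ln 4 + x + ln 2 / 2) / x ^ 2) \<longlongrightarrow> 0) at_top"
    by real_asymp
  have ev1: "eventually (\<lambda>x. 1 \<le> a * x / ln 2) at_top"
    using eventually_ge_at_top[of "ln 2 / a"]
  proof (rule eventually_mono)
    fix x assume "ln 2 / a \<le> x"
    then have "ln 2 \<le> a * x" using a0 by (simp add: field_simps)
    then show "1 \<le> a * x / ln 2" using l2 by simp
  qed
  have ev2: "eventually (\<lambda>x. ln 256 + ln (2 * x + 1) \<le> (1 - a) * x) at_top"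
    using eventually_conj[OF order_tendstoD(2)[OF lim1 e0] eventually_gt_at_top[of 0]]
  proof (rule eventually_mono)
    fix x assume "(ln 256 + ln (2 * x + 1)) / x < \<eta> \<and> 0 < x"
    then have "ln 256 + ln (2 * x + 1) < \<eta> * x" by (simp add: divide_less_eq)
    then show "ln 256 + ln (2 * x + 1) \<le> (1 - a) * x" unfolding a_def by simp
  qed
  have ev3: "eventually (\<lambda>x. ln (4 * x + 2) + \<bar>\<tau>\<bar> + 1 \<le> x) at_top"
    using eventually_conj[OF order_tendstoD(2)[OF lim2 h12] eventually_ge_at_top[of "2 * (\<bar>\<tau>\<bar> + 1)"]]
  proof (rule eventually_mono)
    fix x assume h: "ln (4 * x + 2) / x < 1 / 2 \<and> 2 * (\<bar>\<tau>\<bar> + 1) \<le> x"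
    then have "0 < x" by (smt (verit) abs_ge_zero)
    then have "ln (4 * x + 2) < 1 / 2 * x" using h by (simp add: divide_less_eq)
    moreover have "2 * \<bar>\<tau>\<bar> + 2 \<le> x" using h by (simp add: algebra_simps)
    ultimately show "ln (4 * x + 2) + \<bar>\<tau>\<bar> + 1 \<le> x" by linarith
  qed
  have ev4: "eventually (\<lambda>x. 2 * x * ln 128 + 2 * x * ln (2 * x) + 2 * x * ln 4 + ln 4 + x + ln 2 / 2 < (b - C) * x ^ 2) at_top"
    using eventually_conj[OF order_tendstoD(2)[OF lim4 bC'] eventually_gt_at_top[of 0]]
  proof (rule eventually_mono)
    fix x assume h: "(2 * x * ln 128 + 2 * x * ln (2 * x) + 2 * x * ln 4 + ln 4 + x + ln 2 / 2) / x ^ 2 < b - C \<and> 0 < x"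
    then have "0 < x ^ 2" by simp
    then show "2 * x * ln 128 + 2 * x * ln (2 * x) + 2 * x * ln 4 + ln 4 + x + ln 2 / 2 < (b - C) * x ^ 2"
      using h by (simp add: divide_less_eq)
  qed
  have evx: "eventually (\<lambda>x. (1 \<le> a * x / ln 2) \<and> (ln 256 + ln (2 * x + 1) \<le> (1 - a) * x) \<and>
      (ln (4 * x + 2) + \<bar>\<tau>\<bar> + 1 \<le> x) \<and>
      (2 * x * ln 128 + 2 * x * ln (2 * x) + 2 * x * ln 4 + ln 4 + x + ln 2 / 2 < (b - C) * x ^ 2)) at_top"
    using ev1 ev2 ev3 ev4 by (intro eventually_conj)
  have flim: "filterlim (\<lambda>N::nat. ln (real N)) at_top sequentially"
    by (rule filterlim_compose[OF ln_at_top filterlim_real_sequentially])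
  have evN: "eventually (\<lambda>N::nat. 2 \<le> N \<and> ((1 \<le> a * ln (real N) / ln 2) \<and> (ln 256 + ln (2 * ln (real N) + 1) \<le> (1 - a) * ln (real N)) \<and>
      (ln (4 * ln (real N) + 2) + \<bar>\<tau>\<bar> + 1 \<le> ln (real N)) \<and>
      (2 * ln (real N) * ln 128 + 2 * ln (real N) * ln (2 * ln (real N)) + 2 * ln (real N) * ln 4 + ln 4 + ln (real N) + ln 2 / 2
        < (b - C) * ln (real N) ^ 2))) sequentially"
    by (intro eventually_conj eventually_ge_at_top eventually_compose_filterlim[OF evx flim])
  then obtain N0 where N0: "\<And>N. N \<ge> N0 \<Longrightarrow> 2 \<le> N \<and> ((1 \<le> a * ln (real N) / ln 2) \<and> (ln 256 + ln (2 * ln (real N) + 1) \<le> (1 - a) * ln (real N)) \<and>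
      (ln (4 * ln (real N) + 2) + \<bar>\<tau>\<bar> + 1 \<le> ln (real N)) \<and>
      (2 * ln (real N) * ln 128 + 2 * ln (real N) * ln (2 * ln (real N)) + 2 * ln (real N) * ln 4 + ln 4 + ln (real N) + ln 2 / 2
        < (b - C) * ln (real N) ^ 2))"
    unfolding eventually_sequentially by blast
  show ?thesis
  proof (intro exI allI impI)
    fix N assume "N0 \<le> N"
    note h = N0[OF this]
    show "min_dist N \<tau> < exp (- C * (ln (real N))^2)"
      by (rule per_N[of N "ln (real N)" a]) (use h a0 in \<open>auto simp: b_def\<close>)
  qed
qed



end
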